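(* Let $\Theta$ be a finite simple oriented graph with simple cycles $C_1,\ldots,C_k$ ($k\geq 1$) which contains no two different cycles connected by an oriented path, and fix on the free monoid $F$ on $V(\Theta)$ the deg-lex order induced by a vertex order as described in the context. Let $u,v,w\in F$ with $\operatorname{supp}(u),\operatorname{supp}(w)\subseteq V(C_n)$ for some cycle $C_n$, and suppose every word in the family $u^*vw^*=\{u^avw^b: a,b\geq 0\}$ is reduced. Then either $v$ contains a vertex connected by an edge with $C_n$, or this family of words can be expressed as a finite union of sets of the form $pr^*q=\{pr^cq:c\geq0\}$ or $\{p\}$, for some words $p,q,r\in F$.
   Context: $\mathrm{HK}_\Theta$: generated by vertices $x$ with $x^2=x$; $xy=yx$ if $x,y$ not joined by an edge; $xyx=yxy=xy$ if $x\to y$. The support $\operatorname{supp}(w)$ is the set of letters occurring in $w$. Maximal cycle-reachable subgraph $\Theta'$: full subgraph on all cycle vertices and all vertices joined to some cycle by an oriented path. For a non-cycle vertex $x$ of $\Theta'$, all oriented paths between $x$ and cycles go in the same direction; $k_x$ is the number of oriented paths of length $\geq0$ in $\Theta$ ending at $x$ (if paths go from $x$ into cycles) or beginning at $x$ (if paths go from cycles to $x$). Vertex order: write $C_j$ as $x_{1,j}\to\cdots\to x_{n(j),j}\to x_{1,j}$; on cycle vertices $x_{i,j}<x_{l,m}$ iff $j<m$, or $j=m$ and $i<l$; all cycle vertices are smaller than all non-cycle vertices; on non-cycle vertices of $\Theta'$ any order with $k_x<k_y\Rightarrow y<x$; vertices outside $\Theta'$ ordered arbitrarily (e.g. larger than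 those of $\Theta'$). Reduced word: with $w\nrightarrow t$ meaning $t\notin\operatorname{supp}(w)$ and no $x\in\operatorname{supp}(w)$ has $x\to t$, $t\nrightarrow w$ meaning $t\notin\operatorname{supp}(w)$ and no $y\in\operatorname{supp}(w)$ has $t\to y$, and $t\nleftrightarrow w$ meaning both, a word is reduced if it has no factor $twt$ with $w\nrightarrow t$ or with $t\nrightarrow w$, and no factor $t_1wt_2$ with $t_1>t_2$ and $t_2\nleftrightarrow t_1w$. *)

theory Defs
  imports Main
begin

definition oriented_simple_graph :: "'v set \<Rightarrow> ('v \<Rightarrow> 'v \<Rightarrow> bool) \<Rightarrow> bool" where
  "oriented_simple_graph V E \<longleftrightarrow> finite V \<and> (\<forall>x y. E x y \<longrightarrow> x \<in> V \<and> y \<in> V)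
     \<and> (\<forall>x. \<not> E x x) \<and> (\<forall>x y. E x y \<longrightarrow> \<not> E y x)"

definition simple_cycle :: "'v set \<Rightarrow> ('v \<Rightarrow> 'v \<Rightarrow> bool) \<Rightarrow> 'v list \<Rightarrow> bool" where
  "simple_cycle V E c \<longleftrightarrow> c \<noteq> [] \<and> distinct c \<and> set c \<subseteq> V \<and> successively E c \<and> E (last c) (hd c)"

definition oriented_path :: "'v set \<Rightarrow> ('v \<Rightarrow> 'v \<Rightarrow> bool) \<Rightarrow> 'v list \<Rightarrow> bool" where
  "oriented_path V E p \<longleftrightarrow> p \<noteq> [] \<and> distinct p \<and> set p \<subseteq> V \<and> successively E p"

definition cycle_vertices :: "nat \<Rightarrow> (nat \<Rightarrow> 'v list) \<Rightarrow> 'v set" where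
  "cycle_vertices k cyc = (\<Union>j<k. set (cyc j))"

definition theta' :: "'v set \<Rightarrow> ('v \<Rightarrow> 'v \<Rightarrow> bool) \<Rightarrow> nat \<Rightarrow> (nat \<Rightarrow> 'v list) \<Rightarrow> 'v set" where
  "theta' V E k cyc = {x \<in> V. \<exists>c \<in> cycle_vertices k cyc. E\<^sup>*\<^sup>* x c \<or> E\<^sup>*\<^sup>* c x}"

definition kval :: "'v set \<Rightarrow> ('v \<Rightarrow> 'v \<Rightarrow> bool) \<Rightarrow> nat \<Rightarrow> (nat \<Rightarrow> 'v list) \<Rightarrow> 'v \<Rightarrow> nat" where
  "kval V E k cyc x =
     (if \<exists>c \<in> cycle_vertices k cyc. E\<^sup>*\<^sup>* x c
      then card {p. oriented_path V E p \<and> last p = x}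
      else card {p. oriented_path V E p \<and> hd p = x})"

definition admissible_order ::
  "'v set \<Rightarrow> ('v \<Rightarrow> 'v \<Rightarrow> bool) \<Rightarrow> nat \<Rightarrow> (nat \<Rightarrow> 'v list) \<Rightarrow> ('v \<Rightarrow> 'v \<Rightarrow> bool) \<Rightarrow> bool" where
  "admissible_order V E k cyc lt \<longleftrightarrow>
     (\<forall>x\<in>V. \<not> lt x x) \<and>
     (\<forall>x\<in>V. \<forall>y\<in>V. \<forall>z\<in>V. lt x y \<longrightarrow> lt y z \<longrightarrow> lt x z) \<and>
     (\<forall>x\<in>V. \<forall>y\<in>V. x \<noteq> y \<longrightarrow> lt x y \<or> lt y x) \<and>
     (\<forall>i<k. \<forall>j<k. \<forall>a<length (cyc i). \<forall>b<length (cyc j).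
        lt (cyc i ! a) (cyc j ! b) \<longleftrightarrow> (i < j \<or> (i = j \<and> a < b))) \<and>
     (\<forall>x \<in> cycle_vertices k cyc. \<forall>y \<in> V - cycle_vertices k cyc. lt x y) \<and>
     (\<forall>x \<in> theta' V E k cyc - cycle_vertices k cyc. \<forall>y \<in> theta' V E k cyc - cycle_vertices k cyc.
        kval V E k cyc x < kval V E k cyc y \<longrightarrow> lt y x)"

definition no_arrow_to :: "('v \<Rightarrow> 'v \<Rightarrow> bool) \<Rightarrow> 'v list \<Rightarrow> 'v \<Rightarrow> bool" where
  "no_arrow_to E w t \<longleftrightarrow> t \<notin> set w \<and> (\<forall>x \<in> set w. \<not> E x t)"

definition no_arrow_from :: "('v \<Rightarrow> 'v \<Rightarrow> bool) \<Rightarrow> 'v \<Rightarrow> 'v list \<Rightarrow> bool" where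
  "no_arrow_from E t w \<longleftrightarrow> t \<notin> set w \<and> (\<forall>y \<in> set w. \<not> E t y)"

definition reduced :: "('v \<Rightarrow> 'v \<Rightarrow> bool) \<Rightarrow> ('v \<Rightarrow> 'v \<Rightarrow> bool) \<Rightarrow> 'v list \<Rightarrow> bool" where
  "reduced E lt s \<longleftrightarrow>
     \<not> (\<exists>a t w b. s = a @ [t] @ w @ [t] @ b \<and> (no_arrow_to E w t \<or> no_arrow_from E t w)) \<and>
     \<not> (\<exists>a t1 w t2 b. s = a @ [t1] @ w @ [t2] @ b \<and> lt t2 t1 \<and>
          no_arrow_from E t2 (t1 # w) \<and> no_arrow_to E (t1 # w) t2)"

definition word_pow :: "'v list \<Rightarrow> nat \<Rightarrow> 'v list" where
  "word_pow u a = concat (replicate a u)"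

end

theory Submission
  imports Defs
begin


definition cnt :: "'v list \<Rightarrow> 'v \<Rightarrow> nat" where
  "cnt s x = length (filter (\<lambda>c. c = x) s)"

lemma cnt_simps[simp]: "cnt [] x = 0" "cnt (a # s) x = (if a = x then Suc (cnt s x) else cnt s x)"
  "cnt (s @ t) x = cnt s x + cnt t x"
  by (auto simp: cnt_def)

lemma filter_not_alt:
  "\<not> successively (\<noteq>) (filter P s) \<Longrightarrow>
   \<exists>a t mid b. P t \<and> s = a @ [t] @ mid @ [t] @ b \<and> (\<forall>q\<in>set mid. \<not> P q)"
proof (induction s)
  case Nil then show ?case by simp
next
  case (Cons c s)
  show ?case
  proof (cases "P c")
    case True
    show ?thesis
    proof (cases "successively (\<noteq>) (filter P s)")
      case True
      with Cons.prems \<open>P c\<close> have "filter P s \<noteq> [] \<and> hd (filter P s) = c"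
        by (auto simp: successively_Cons)
      then obtain rest where "filter P s = c # rest" by (cases "filter P s") auto
      from filter_eq_ConsD[OF this] obtain us vs where
        "s = us @ c # vs" "\<forall>u\<in>set us. \<not> P u" by blast
      with \<open>P c\<close> show ?thesis by (intro exI[of _ "[]"] exI[of _ c] exI[of _ us] exI[of _ vs]) auto
    next
      case False
      from Cons.IH[OF this] obtain a t mid b where "P t" "s = a @ [t] @ mid @ [t] @ b" "\<forall>q\<in>set mid. \<not> P q" by blast
      then show ?thesis by (intro exI[of _ "c # a"] exI[of _ t] exI[of _ mid] exI[of _ b]) auto
    qed
  next
    case False
    with Cons.prems have "\<not> successively (\<noteq>) (filter P s)" by simp
    from Cons.IH[OF this] obtain a t mid b where "P t" "s = a @ [t] @ mid @ [t] @ b" "\<forall>q\<in>set mid. \<not> P q" by blast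
    then show ?thesis by (intro exI[of _ "c # a"] exI[of _ t] exI[of _ mid] exI[of _ b]) auto
  qed
qed


lemma alt_eq:
  "successively (\<noteq>) xs \<Longrightarrow> successively (\<noteq>) ys \<Longrightarrow> set xs \<subseteq> {z,y} \<Longrightarrow> set ys \<subseteq> {z,y}
   \<Longrightarrow> length xs = length ys \<Longrightarrow> hd xs = hd ys \<Longrightarrow> xs = ys"
proof (induction xs arbitrary: ys)
  case Nil then show ?case by simp
next
  case (Cons a xs)
  obtain a' ys' where ys: "ys = a' # ys'" using Cons.prems(5) by (cases ys) auto
  have aa: "a' = a" using Cons.prems(6) ys by simp
  show ?case
  proof (cases xs)
    case Nil then show ?thesis using Cons.prems(5) ys aa by simp
  next
    case (Cons b xs')
    obtain b' ys'' where ys': "ys' = b' # ys''" using Cons.prems(5) ys \<open>xs = b # xs'\<close> by (cases ys') auto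
    have "b \<noteq> a" using Cons.prems(1) \<open>xs = b # xs'\<close> by auto
    moreover have "b' \<noteq> a" using Cons.prems(2) ys ys' aa by auto
    moreover have "a \<in> {z,y}" "b \<in> {z,y}" "b' \<in> {z,y}"
      using Cons.prems(3,4) ys ys' \<open>xs = b # xs'\<close> by auto
    ultimately have bb: "b = b'" by blast
    have p1: "successively (\<noteq>) xs" using Cons.prems(1) \<open>xs = b # xs'\<close> by simp
    have p2: "successively (\<noteq>) ys'" using Cons.prems(2) ys ys' by simp
    have p3: "set xs \<subseteq> {z,y}" using Cons.prems(3) by simp
    have p4: "set ys' \<subseteq> {z,y}" using Cons.prems(4) ys by simp
    have p5: "length xs = length ys'" using Cons.prems(5) ys by simp
    have p6: "hd xs = hd ys'" using bb ys' \<open>xs = b # xs'\<close> by simp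
    have "xs = ys'" by (rule Cons.IH[OF p1 p2 p3 p4 p5 p6])
    then show ?thesis using ys aa by simp
  qed
qed

lemma cnt_two: "x \<noteq> y \<Longrightarrow> x \<in> {a,b} \<Longrightarrow> y \<in> {a,b} \<Longrightarrow> cnt [x,y] a = cnt [x,y] b"
  by auto

lemma alt_cnt:
  "successively (\<noteq>) xs \<Longrightarrow> set xs \<subseteq> {a,b} \<Longrightarrow> xs \<noteq> [] \<Longrightarrow> hd xs \<noteq> last xs \<Longrightarrow> cnt xs a = cnt xs b"
proof (induction xs rule: induct_list012)
  case 1 then show ?case by simp
next
  case (2 x) then show ?case by simp
next
  case (3 x y zs)
  have xy: "x \<noteq> y" "x \<in> {a,b}" "y \<in> {a,b}" using "3.prems"(1,2) by auto
  have c2: "cnt [x,y] a = cnt [x,y] b" using cnt_two[OF xy] .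
  have split: "cnt (x # y # zs) c = cnt [x,y] c + cnt zs c" for c
    using cnt_simps(3)[of "[x,y]" zs c] by simp
  show ?case
  proof (cases zs)
    case Nil then show ?thesis using c2 split by simp
  next
    case (Cons z zs')
    have "y \<noteq> z" using "3.prems"(1) Cons by simp
    moreover have "z \<in> {a,b}" using "3.prems"(2) Cons by simp
    ultimately have zx: "z = x" using xy by blast
    have s1: "successively (\<noteq>) zs" using "3.prems"(1) Cons by simp
    have s2: "set zs \<subseteq> {a,b}" using "3.prems"(2) by simp
    have s3: "hd zs \<noteq> last zs" using "3.prems"(4) Cons zx by simp
    have "cnt zs a = cnt zs b" using "3.IH"(1)[OF s1 s2 _ s3] Cons by simp
    then show ?thesis using c2 split by simp
  qed
qed



lemma reduced_Cons: assumes r: "reduced E lt (x # s)" shows "reduced E lt s"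
proof -
  have 1: "\<not> (\<exists>a t w b. s = a @ [t] @ w @ [t] @ b \<and> (no_arrow_to E w t \<or> no_arrow_from E t w))"
  proof
    assume "\<exists>a t w b. s = a @ [t] @ w @ [t] @ b \<and> (no_arrow_to E w t \<or> no_arrow_from E t w)"
    then obtain a t w b where "s = a @ [t] @ w @ [t] @ b" "no_arrow_to E w t \<or> no_arrow_from E t w" by blast
    then have "x # s = (x # a) @ [t] @ w @ [t] @ b \<and> (no_arrow_to E w t \<or> no_arrow_from E t w)" by simp
    then show False using r unfolding reduced_def by blast
  qed
  have 2: "\<not> (\<exists>a t1 w t2 b. s = a @ [t1] @ w @ [t2] @ b \<and> lt t2 t1 \<and>
          no_arrow_from E t2 (t1 # w) \<and> no_arrow_to E (t1 # w) t2)"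
  proof
    assume "\<exists>a t1 w t2 b. s = a @ [t1] @ w @ [t2] @ b \<and> lt t2 t1 \<and>
          no_arrow_from E t2 (t1 # w) \<and> no_arrow_to E (t1 # w) t2"
    then obtain a t1 w t2 b where h: "s = a @ [t1] @ w @ [t2] @ b" "lt t2 t1"
          "no_arrow_from E t2 (t1 # w)" "no_arrow_to E (t1 # w) t2" by blast
    then have "x # s = (x # a) @ [t1] @ w @ [t2] @ b" by simp
    then show False using r h unfolding reduced_def by blast
  qed
  show ?thesis unfolding reduced_def using 1 2 by blast
qed

lemma first_diff:
  assumes red: "reduced E lt (x # s1)" and yx: "y \<noteq> x" and ys: "y \<in> set (x # s1)"
    and hdq: "\<forall>z\<in>set (x # s1). (E z y \<or> E y z) \<longrightarrow> hd (filter (\<lambda>c. c = z \<or> c = y) (x # s1)) = y"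
  shows "\<not> lt y x"
proof
  assume lt: "lt y x"
  obtain pre beta where sp: "x # s1 = pre @ y # beta" and ny: "y \<notin> set pre"
    using split_list_first[OF ys] by blast
  obtain alpha where pre: "pre = x # alpha" using sp yx by (cases pre) auto
  have noe: "\<not> (E z y \<or> E y z)" if z: "z \<in> set pre" for z
  proof
    assume e: "E z y \<or> E y z"
    let ?Q = "\<lambda>c. c = z \<or> c = y"
    have "filter ?Q (x # s1) = filter ?Q pre @ y # filter ?Q beta" using sp by simp
    moreover have "filter ?Q pre \<noteq> []" using z by (auto simp: filter_empty_conv)
    moreover have "hd (filter ?Q pre) \<in> set pre"
      using hd_in_set[OF \<open>filter ?Q pre \<noteq> []\<close>] by auto
    ultimately have "hd (filter ?Q (x # s1)) \<noteq> y" using ny by auto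
    moreover have "z \<in> set (x # s1)" using sp z by auto
    ultimately show False using hdq e by blast
  qed
  have "x # s1 = [] @ [x] @ alpha @ [y] @ beta" using sp pre by simp
  moreover have "no_arrow_from E y (x # alpha)" using ny noe pre by (auto simp: no_arrow_from_def)
  moreover have "no_arrow_to E (x # alpha) y" using ny noe pre by (auto simp: no_arrow_to_def)
  ultimately show False using red lt unfolding reduced_def by blast
qed

lemma pf_unique:
  assumes "reduced E lt s" "reduced E lt s'" "set s \<subseteq> V" "set s' \<subseteq> V"
    and tot: "\<forall>x\<in>V. \<forall>y\<in>V. x \<noteq> y \<longrightarrow> lt x y \<or> lt y x"
    and "\<forall>z y. (z = y \<or> E z y \<or> E y z) \<longrightarrow> filter (\<lambda>c. c = z \<or> c = y) s = filter (\<lambda>c. c = z \<or> c = y) s'"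
  shows "s = s'"
  using assms(1-4,6)
proof (induction s arbitrary: s')
  case Nil
  show ?case
  proof (rule ccontr)
    assume "[] \<noteq> s'"
    then obtain y where "y \<in> set s'" by (cases s') auto
    moreover have "filter (\<lambda>c. c = y \<or> c = y) [] = filter (\<lambda>c. c = y \<or> c = y) s'" using Nil.prems(5) by blast
    ultimately show False by (simp add: empty_filter_conv) blast
  qed
next
  case (Cons x s1)
  show ?case
  proof (cases s')
    case Nil
    have "filter (\<lambda>c. c = x \<or> c = x) (x # s1) = filter (\<lambda>c. c = x \<or> c = x) s'" using Cons.prems(5) by blast
    then show ?thesis using Nil by simp
  next
    case (Cons y s1')
    show ?thesis
    proof (cases "x = y")
      case True
      have f: "filter (\<lambda>c. c = z \<or> c = w) s1 = filter (\<lambda>c. c = z \<or> c = w) s1'"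
        if "z = w \<or> E z w \<or> E w z" for z w
      proof -
        have "filter (\<lambda>c. c = z \<or> c = w) (x # s1) = filter (\<lambda>c. c = z \<or> c = w) (y # s1')"
          using Cons.prems(5) that Cons by blast
        then show ?thesis using True by (simp split: if_splits)
      qed
      have r1: "reduced E lt s1" using reduced_Cons[OF Cons.prems(1)] .
      have r2: "reduced E lt s1'" using reduced_Cons[of E lt y s1'] Cons.prems(2) Cons by simp
      have v1: "set s1 \<subseteq> V" using Cons.prems(3) by simp
      have v2: "set s1' \<subseteq> V" using Cons.prems(4) Cons by simp
      have f': "\<forall>z w. (z = w \<or> E z w \<or> E w z) \<longrightarrow> filter (\<lambda>c. c = z \<or> c = w) s1 = filter (\<lambda>c. c = z \<or> c = w) s1'"
        using f by blast
      have "s1 = s1'" by (rule Cons.IH[OF r1 r2 v1 v2 f'])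
      then show ?thesis using True Cons by simp
    next
      case False
      have yin: "y \<in> set (x # s1)"
      proof -
        have "filter (\<lambda>c. c = y \<or> c = y) (x # s1) = filter (\<lambda>c. c = y \<or> c = y) s'" using Cons.prems(5) by blast
        then have "filter (\<lambda>c. c = y \<or> c = y) (x # s1) \<noteq> []" using Cons by simp
        then show ?thesis by (auto simp: filter_empty_conv split: if_splits)
      qed
      have xin: "x \<in> set (y # s1')"
      proof -
        have "filter (\<lambda>c. c = x \<or> c = x) (x # s1) = filter (\<lambda>c. c = x \<or> c = x) s'" using Cons.prems(5) by blast
        moreover have "filter (\<lambda>c. c = x \<or> c = x) (x # s1) \<noteq> []" by simp
        ultimately have "filter (\<lambda>c. c = x \<or> c = x) s' \<noteq> []" by argo
        then show ?thesis using Cons by (auto simp: filter_empty_conv split: if_splits)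
      qed
      have h1: "\<not> lt y x"
      proof (rule first_diff[OF Cons.prems(1) _ yin])
        show "y \<noteq> x" using False by simp
        show "\<forall>z\<in>set (x # s1). (E z y \<or> E y z) \<longrightarrow> hd (filter (\<lambda>c. c = z \<or> c = y) (x # s1)) = y"
        proof (intro ballI impI)
          fix z assume "E z y \<or> E y z"
          then have "filter (\<lambda>c. c = z \<or> c = y) (x # s1) = filter (\<lambda>c. c = z \<or> c = y) (y # s1')"
            using Cons.prems(5) Cons by blast
          then show "hd (filter (\<lambda>c. c = z \<or> c = y) (x # s1)) = y" by simp
        qed
      qed
      have h2: "\<not> lt x y"
      proof (rule first_diff[OF _ _ xin])
        show "reduced E lt (y # s1')" using Cons.prems(2) Cons by simp
        show "x \<noteq> y" using False by simp
        show "\<forall>z\<in>set (y # s1'). (E z x \<or> E x z) \<longrightarrow> hd (filter (\<lambda>c. c = z \<or> c = x) (y # s1')) = x"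
        proof (intro ballI impI)
          fix z assume "E z x \<or> E x z"
          then have eq2: "filter (\<lambda>c. c = x \<or> c = z) (x # s1) = filter (\<lambda>c. c = x \<or> c = z) (y # s1')"
            using Cons.prems(5) Cons by blast
          have "filter (\<lambda>c. c = z \<or> c = x) (y # s1') = filter (\<lambda>c. c = x \<or> c = z) (y # s1')"
            by (rule filter_cong) auto
          also have "\<dots> = filter (\<lambda>c. c = x \<or> c = z) (x # s1)" using eq2 by simp
          finally show "hd (filter (\<lambda>c. c = z \<or> c = x) (y # s1')) = x" by simp
        qed
      qed
      have "x \<in> V" "y \<in> V" using Cons.prems(3,4) Cons by auto
      then show ?thesis using tot h1 h2 False by blast
    qed
  qed
qed



lemma successively_take: "successively P xs \<Longrightarrow> successively P (take l xs)"
  unfolding successively_conv_nth by auto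

lemma successively_drop: "successively P xs \<Longrightarrow> successively P (drop l xs)"
  unfolding successively_conv_nth by (auto simp: add.commute)

lemma in_set_drop_take:
  assumes "distinct c" "k < length c"
  shows "c ! k \<in> set (drop j (take l c)) \<longleftrightarrow> (j \<le> k \<and> k < l)"
proof
  assume "c ! k \<in> set (drop j (take l c))"
  then obtain p where p: "p < length (drop j (take l c))" "drop j (take l c) ! p = c ! k"
    by (auto simp: in_set_conv_nth)
  then have "j + p < l" "j + p < length c" by auto
  then have "c ! (j + p) = c ! k" using p by simp
  then have "j + p = k" using assms \<open>j + p < length c\<close> by (simp add: nth_eq_iff_index_eq)
  then show "j \<le> k \<and> k < l" using \<open>j + p < l\<close> by simp
next
  assume "j \<le> k \<and> k < l"
  then have "k - j < length (drop j (take l c))" "drop j (take l c) ! (k - j) = c ! k"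
    using assms by auto
  then show "c ! k \<in> set (drop j (take l c))" by (metis nth_mem)
qed

lemma cycle_succ:
  assumes "simple_cycle V E c" "i < length c"
  shows "E (c ! i) (c ! (Suc i mod length c))"
proof (cases "Suc i < length c")
  case True
  then show ?thesis using assms successively_nth[of E c i] by (simp add: simple_cycle_def)
next
  case False
  then have "Suc i = length c" using assms by simp
  moreover have "c ! i = last c"
  proof -
    have "c \<noteq> []" "i = length c - 1" using \<open>Suc i = length c\<close> by auto
    then show ?thesis by (simp add: last_conv_nth)
  qed
  moreover have "c ! 0 = hd c" using assms by (simp add: simple_cycle_def hd_conv_nth)
  ultimately show ?thesis using assms by (simp add: simple_cycle_def)
qed

lemma no_chord:
  assumes sc: "simple_cycle V E c" and irr: "\<forall>x. \<not> E x x"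
    and hyp: "\<forall>c'. simple_cycle V E c' \<longrightarrow> set c' \<inter> set c \<noteq> {} \<longrightarrow> set c' = set c"
    and ij: "i < length c" "j < length c" and e: "E (c ! i) (c ! j)"
  shows "j = Suc i mod length c"
proof (rule ccontr)
  assume ne: "j \<noteq> Suc i mod length c"
  let ?m = "length c"
  have d: "distinct c" and sV: "set c \<subseteq> V" and su: "successively E c" and lh: "E (last c) (hd c)"
    and cne: "c \<noteq> []"
    using sc by (auto simp: simple_cycle_def)
  have "i \<noteq> j" using e irr by auto
  show False
  proof (cases "i < j")
    case True
    then have sij: "Suc i < j" using ne ij by (cases "Suc i = ?m") auto
    define c' where "c' = drop j c @ take (Suc i) c"
    have s1: "set (drop j c) = {c ! k | k. j \<le> k \<and> k < ?m}"
    proof -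
      have "x \<in> set (drop j c) \<longleftrightarrow> x \<in> {c ! k | k. j \<le> k \<and> k < ?m}" for x
      proof
        assume "x \<in> set (drop j c)"
        then obtain k where "k < ?m" "x = c ! k" by (metis in_set_conv_nth in_set_dropD)
        then show "x \<in> {c ! k | k. j \<le> k \<and> k < ?m}"
          using in_set_drop_take[OF d, of k j ?m] \<open>x \<in> set (drop j c)\<close> by auto
      next
        assume "x \<in> {c ! k | k. j \<le> k \<and> k < ?m}"
        then obtain k where "j \<le> k" "k < ?m" "x = c ! k" by auto
        then show "x \<in> set (drop j c)" using in_set_drop_take[OF d, of k j ?m] by auto
      qed
      then show ?thesis by blast
    qed
    have cs: "simple_cycle V E c'"
      unfolding simple_cycle_def
    proof (intro conjI)
      show "c' \<noteq> []" using ij by (simp add: c'_def)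
      show "distinct c'" unfolding c'_def
        using d set_take_disj_set_drop_if_distinct[OF d, of "Suc i" j] True by auto
      show "set c' \<subseteq> V" using sV by (auto simp: c'_def dest: in_set_dropD in_set_takeD)
      show "successively E c'" unfolding c'_def successively_append_iff
        using successively_take[OF su] successively_drop[OF su] lh ij by auto
      have tne: "take (Suc i) c \<noteq> []" using ij by auto
      have "last (take (Suc i) c) = take (Suc i) c ! (length (take (Suc i) c) - 1)"
        by (rule last_conv_nth[OF tne])
      also have "\<dots> = c ! i" using ij by simp
      finally have "last (take (Suc i) c) = c ! i" .
      then have "last c' = c ! i" unfolding c'_def using tne by (simp add: last_append)
      moreover have "hd c' = c ! j" unfolding c'_def using ij by (simp add: hd_drop_conv_nth)
      ultimately show "E (last c') (hd c')" using e by simp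
    qed
    have "c ! j \<in> set c'" using ij by (simp add: c'_def s1) blast
    then have "set c' \<inter> set c \<noteq> {}" using ij by auto
    then have eq: "set c' = set c" using hyp cs by blast
    have "c ! Suc i \<notin> set c'"
    proof -
      have "c ! Suc i \<notin> set (drop j c)"
        using in_set_drop_take[OF d, of "Suc i" j ?m] sij ij by simp
      moreover have "c ! Suc i \<notin> set (take (Suc i) c)"
        using in_set_drop_take[OF d, of "Suc i" 0 "Suc i"] sij ij by simp
      ultimately show ?thesis by (simp add: c'_def)
    qed
    moreover have "c ! Suc i \<in> set c" using sij ij by simp
    ultimately show False using eq by blast
  next
    case False
    then have ji: "j < i" using \<open>i \<noteq> j\<close> by simp
    define c' where "c' = drop j (take (Suc i) c)"
    have cs: "simple_cycle V E c'"
      unfolding simple_cycle_def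
    proof (intro conjI)
      show "c' \<noteq> []" using ij ji by (simp add: c'_def)
      show "distinct c'" unfolding c'_def using d by simp
      show "set c' \<subseteq> V" using sV by (auto simp: c'_def dest: in_set_dropD in_set_takeD)
      show "successively E c'" unfolding c'_def
        using successively_drop[OF successively_take[OF su]] by simp
      have "last c' = c ! i" unfolding c'_def using ij ji by (simp add: last_conv_nth)
      moreover have "hd c' = c ! j" unfolding c'_def using ij ji by (simp add: hd_drop_conv_nth)
      ultimately show "E (last c') (hd c')" using e by simp
    qed
    have "c ! j \<in> set c'" using in_set_drop_take[OF d, of j j "Suc i"] ij ji by (simp add: c'_def)
    then have "set c' \<inter> set c \<noteq> {}" using ij by auto
    then have eq: "set c' = set c" using hyp cs by blast
    show False
    proof (cases "Suc i < ?m")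
      case True
      have "c ! Suc i \<notin> set c'" using in_set_drop_take[OF d, of "Suc i" j "Suc i"] True
        by (simp add: c'_def)
      moreover have "c ! Suc i \<in> set c" using True by simp
      ultimately show False using eq by blast
    next
      case False
      then have "Suc i = ?m" using ij by simp
      then have "j \<noteq> 0" using ne by simp
      have "c ! 0 \<notin> set c'" using in_set_drop_take[OF d, of 0 j "Suc i"] \<open>j \<noteq> 0\<close> ij
        cne by (simp add: c'_def)
      moreover have "c ! 0 \<in> set c" using cne by (intro nth_mem) simp
      ultimately show False using eq by blast
    qed
  qed
qed



lemma alt_reduced:
  assumes red: "reduced E lt s" and sC: "set s \<subseteq> C" and e: "E z y" and zC: "z \<in> C" and yC: "y \<in> C"
    and uo: "\<forall>a\<in>C. \<forall>b\<in>C. \<forall>b'\<in>C. E a b \<longrightarrow> E a b' \<longrightarrow> b = b'"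
    and ui: "\<forall>a\<in>C. \<forall>b\<in>C. \<forall>b'\<in>C. E b a \<longrightarrow> E b' a \<longrightarrow> b = b'"
  shows "successively (\<noteq>) (filter (\<lambda>c. c = z \<or> c = y) s)"
proof (rule ccontr)
  assume "\<not> successively (\<noteq>) (filter (\<lambda>c. c = z \<or> c = y) s)"
  from filter_not_alt[OF this] obtain a t mid b where
    t: "t = z \<or> t = y" and sd: "s = a @ [t] @ mid @ [t] @ b" and mid: "\<forall>q\<in>set mid. \<not> (q = z \<or> q = y)"
    by blast
  have midC: "set mid \<subseteq> C" using sC sd by auto
  have tm: "t \<notin> set mid" using mid t by blast
  have n1: "\<not> no_arrow_to E mid t" and n2: "\<not> no_arrow_from E t mid"
    using red sd unfolding reduced_def by blast+
  show False
  proof (cases "t = z")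
    case True
    then obtain q where "q \<in> set mid" "E z q" using n2 tm by (auto simp: no_arrow_from_def)
    then have "q = y" using uo zC yC midC e by blast
    then show False using mid \<open>q \<in> set mid\<close> by blast
  next
    case False
    then have "t = y" using t by simp
    then obtain q where "q \<in> set mid" "E q y" using n1 tm by (auto simp: no_arrow_to_def)
    then have "q = z" using ui zC yC midC e by blast
    then show False using mid \<open>q \<in> set mid\<close> by blast
  qed
qed

lemma word_pow_0[simp]: "word_pow u 0 = []" by (simp add: word_pow_def)
lemma word_pow_Suc: "word_pow u (Suc a) = u @ word_pow u a" by (simp add: word_pow_def)
lemma word_pow_1[simp]: "word_pow u 1 = u" by (simp add: word_pow_def)
lemma word_pow_add: "word_pow u (a + b) = word_pow u a @ word_pow u b"
  by (simp add: word_pow_def replicate_add)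
lemma word_pow_mult: "word_pow u (a * b) = word_pow (word_pow u a) b"
  by (induction b) (simp_all add: word_pow_add word_pow_Suc)
lemma word_pow_Nil[simp]: "word_pow [] a = []" by (simp add: word_pow_def)
lemma set_word_pow: "set (word_pow u a) \<subseteq> set u" by (auto simp: word_pow_def)
lemma filter_word_pow: "filter P (word_pow u a) = word_pow (filter P u) a"
  by (induction a) (simp_all add: word_pow_Suc)
lemma cnt_word_pow: "cnt (word_pow u a) x = a * cnt u x"
  by (induction a) (simp_all add: word_pow_Suc)

lemma length_filter_pair: "z \<noteq> y \<Longrightarrow> length (filter (\<lambda>c. c = z \<or> c = y) t) = cnt t z + cnt t y"
  by (induction t) auto

lemma cnt_filter: "Q z \<Longrightarrow> cnt (filter Q s) z = cnt s z"
  by (induction s) auto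

lemma filter_single: "filter (\<lambda>c. c = y \<or> c = y) t = replicate (cnt t y) y"
  by (induction t) auto

lemma filter_pair_notin: "z \<notin> set t \<Longrightarrow> filter (\<lambda>c. c = z \<or> c = y) t = replicate (cnt t y) y"
  by (induction t) auto

lemma filter_pair_notin2: "y \<notin> set t \<Longrightarrow> filter (\<lambda>c. c = z \<or> c = y) t = replicate (cnt t z) z"
  by (induction t) auto

lemma cnt_notin: "x \<notin> set t \<Longrightarrow> cnt t x = 0"
  by (induction t) auto



lemma cnt_edge:
  assumes red: "reduced E lt (x @ x)" and sC: "set x \<subseteq> C" and e: "E z y" and zC: "z \<in> C" and yC: "y \<in> C"
    and uo: "\<forall>a\<in>C. \<forall>b\<in>C. \<forall>b'\<in>C. E a b \<longrightarrow> E a b' \<longrightarrow> b = b'"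
    and ui: "\<forall>a\<in>C. \<forall>b\<in>C. \<forall>b'\<in>C. E b a \<longrightarrow> E b' a \<longrightarrow> b = b'"
  shows "cnt x z = cnt x y"
proof -
  let ?Q = "\<lambda>c. c = z \<or> c = y"
  define f where "f = filter ?Q x"
  have al: "successively (\<noteq>) (f @ f)"
    using alt_reduced[OF red _ e zC yC uo ui] sC unfolding f_def by simp
  have cz: "cnt x z = cnt f z" and cy: "cnt x y = cnt f y"
    unfolding f_def by (simp_all add: cnt_filter)
  show ?thesis
  proof (cases "f = []")
    case True then show ?thesis using cz cy by simp
  next
    case False
    have "successively (\<noteq>) f" "last f \<noteq> hd f" using al False by (auto simp: successively_append_iff)
    moreover have "set f \<subseteq> {z, y}" unfolding f_def by auto
    ultimately have "cnt f z = cnt f y" using alt_cnt[of f z y] False by auto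
    then show ?thesis using cz cy by simp
  qed
qed

lemma cnt_pos: "x \<in> set t \<Longrightarrow> 0 < cnt t x"
  by (induction t) auto

lemma two_elems: "l \<noteq> h1 \<Longrightarrow> l \<noteq> h2 \<Longrightarrow> h1 \<in> {z, y} \<Longrightarrow> l \<in> {z, y} \<Longrightarrow> h2 \<in> {z, y} \<Longrightarrow> h1 = h2"
  by auto

lemma cnt_uniform:
  assumes sc: "simple_cycle V E c"
    and h: "\<forall>z y. z \<in> set c \<longrightarrow> y \<in> set c \<longrightarrow> E z y \<longrightarrow> cnt x z = cnt x y"
  shows "i < length c \<Longrightarrow> cnt x (c ! i) = cnt x (c ! 0)"
proof (induction i)
  case 0 then show ?case by simp
next
  case (Suc i)
  have "E (c ! i) (c ! (Suc i mod length c))" using cycle_succ[OF sc, of i] Suc.prems by simp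
  then have "E (c ! i) (c ! Suc i)" using Suc.prems by simp
  then have "cnt x (c ! i) = cnt x (c ! Suc i)" using h Suc.prems by simp
  then show ?case using Suc by simp
qed


theorem lemma3p3:
  fixes V :: "'v set" and E :: "'v \<Rightarrow> 'v \<Rightarrow> bool" and k :: nat and cyc :: "nat \<Rightarrow> 'v list"
    and lt :: "'v \<Rightarrow> 'v \<Rightarrow> bool" and u v w :: "'v list" and n :: nat
  assumes graph: "oriented_simple_graph V E"
    and k_pos: "k \<ge> 1"
    and cycles: "\<forall>j<k. simple_cycle V E (cyc j)"
    and all_cycles: "\<forall>c. simple_cycle V E c \<longrightarrow> (\<exists>j<k. \<exists>m. c = rotate m (cyc j))"
    and different: "\<forall>i<k. \<forall>j<k. i \<noteq> j \<longrightarrow> (\<forall>m. cyc i \<noteq> rotate m (cyc j))"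
    and not_connected: "\<forall>i<k. \<forall>j<k. i \<noteq> j \<longrightarrow> \<not> (\<exists>x\<in>set (cyc i). \<exists>y\<in>set (cyc j). E\<^sup>*\<^sup>* x y)"
    and order: "admissible_order V E k cyc lt"
    and words: "set u \<subseteq> V" "set v \<subseteq> V" "set w \<subseteq> V"
    and n: "n < k" "set u \<subseteq> set (cyc n)" "set w \<subseteq> set (cyc n)"
    and red: "\<forall>a b. reduced E lt (word_pow u a @ v @ word_pow w b)"
  shows "(\<exists>x\<in>set v. \<exists>c\<in>set (cyc n). E x c \<or> E c x) \<or>
         (\<exists>S P. finite S \<and> finite P \<and>
            (\<forall>(p, r, q) \<in> S. set p \<subseteq> V \<and> set r \<subseteq> V \<and> set q \<subseteq> V) \<and>
            (\<forall>p \<in> P. set p \<subseteq> V) \<and>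
            {word_pow u a @ v @ word_pow w b | a b. True} =
              (\<Union>(p, r, q) \<in> S. {p @ word_pow r c @ q | c. True}) \<union> P)"
proof -
  have irr: "\<forall>x. \<not> E x x" using graph by (simp add: oriented_simple_graph_def)
  have tot: "\<forall>x\<in>V. \<forall>y\<in>V. x \<noteq> y \<longrightarrow> lt x y \<or> lt y x"
    using order unfolding admissible_order_def by blast
  have c4: "\<forall>i<k. \<forall>j<k. \<forall>a<length (cyc i). \<forall>b<length (cyc j).
        lt (cyc i ! a) (cyc j ! b) \<longleftrightarrow> (i < j \<or> (i = j \<and> a < b))"
    using order unfolding admissible_order_def by blast
  have c5: "\<forall>x \<in> cycle_vertices k cyc. \<forall>y \<in> V - cycle_vertices k cyc. lt x y"
    using order unfolding admissible_order_def by blast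
  define c where "c = cyc n"
  have sc: "simple_cycle V E c" using cycles n(1) by (simp add: c_def)
  have hyp: "\<forall>c'. simple_cycle V E c' \<longrightarrow> set c' \<inter> set c \<noteq> {} \<longrightarrow> set c' = set c"
  proof (intro allI impI)
    fix c' assume sc': "simple_cycle V E c'" and int: "set c' \<inter> set c \<noteq> {}"
    obtain j r where j: "j < k" "c' = rotate r (cyc j)" using all_cycles sc' by blast
    have setc': "set c' = set (cyc j)" using j by simp
    show "set c' = set c"
    proof (cases "j = n")
      case True then show ?thesis using setc' c_def by simp
    next
      case False
      obtain x where x: "x \<in> set c'" "x \<in> set c" using int by blast
      have "E\<^sup>*\<^sup>* x x" by simp
      then show ?thesis using not_connected j(1) n(1) False setc' c_def x by blast
    qed
  qed
  define C where "C = set c"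
  define m where "m = length c"
  have cne: "c \<noteq> []" using sc by (simp add: simple_cycle_def)
  have m0: "0 < m" using cne by (simp add: m_def)
  have nc: "\<And>i j. i < m \<Longrightarrow> j < m \<Longrightarrow> E (c ! i) (c ! j) \<Longrightarrow> j = Suc i mod m"
    using no_chord[OF sc irr hyp] by (simp add: m_def)
  have modf: "\<And>i. i < m \<Longrightarrow> Suc i mod m = (if Suc i = m then 0 else Suc i)" by auto
  have modinj: "\<And>i j. i < m \<Longrightarrow> j < m \<Longrightarrow> Suc i mod m = Suc j mod m \<Longrightarrow> i = j"
    using modf by (auto split: if_splits)
  have uo: "\<forall>a\<in>C. \<forall>b\<in>C. \<forall>b'\<in>C. E a b \<longrightarrow> E a b' \<longrightarrow> b = b'"
  proof (intro ballI impI)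
    fix a b b' assume "a \<in> C" "b \<in> C" "b' \<in> C" "E a b" "E a b'"
    then obtain i j j' where "i < m" "j < m" "j' < m" "a = c ! i" "b = c ! j" "b' = c ! j'"
      by (auto simp: C_def m_def in_set_conv_nth)
    then show "b = b'" using nc \<open>E a b\<close> \<open>E a b'\<close> by metis
  qed
  have ui: "\<forall>a\<in>C. \<forall>b\<in>C. \<forall>b'\<in>C. E b a \<longrightarrow> E b' a \<longrightarrow> b = b'"
  proof (intro ballI impI)
    fix a b b' assume "a \<in> C" "b \<in> C" "b' \<in> C" "E b a" "E b' a"
    then obtain i j j' where ij: "i < m" "j < m" "j' < m" "a = c ! i" "b = c ! j" "b' = c ! j'"
      by (auto simp: C_def m_def in_set_conv_nth)
    then have "i = Suc j mod m" "i = Suc j' mod m" using nc \<open>E b a\<close> \<open>E b' a\<close> by metis+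
    then have "j = j'" using modinj ij by metis
    then show "b = b'" using ij by simp
  qed
  have Cnb: "\<forall>x\<in>C. \<exists>y\<in>C. E x y"
  proof
    fix x assume "x \<in> C"
    then obtain i where i: "i < m" "x = c ! i" by (auto simp: C_def m_def in_set_conv_nth)
    have "E x (c ! (Suc i mod m))" using cycle_succ[OF sc, of i] i by (simp add: m_def)
    moreover have "c ! (Suc i mod m) \<in> C" using m0 by (simp add: C_def m_def)
    ultimately show "\<exists>y\<in>C. E x y" by blast
  qed
  have CV: "C \<subseteq> V" using sc by (simp add: C_def simple_cycle_def)
  have uC: "set u \<subseteq> C" and wC: "set w \<subseteq> C" using n by (simp_all add: C_def c_def)
  show ?thesis
  proof (cases "\<exists>x\<in>set v. \<exists>c\<in>set (cyc n). E x c \<or> E c x")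
    case True then show ?thesis by blast
  next
    case False
    then have nadj: "\<forall>x\<in>set v. \<forall>y\<in>C. \<not> E x y \<and> \<not> E y x" by (auto simp: C_def c_def)
    have vC: "\<forall>x\<in>set v. x \<notin> C" using nadj Cnb by blast
    have "\<exists>S P. finite S \<and> finite P \<and>
            (\<forall>(p, r, q) \<in> S. set p \<subseteq> V \<and> set r \<subseteq> V \<and> set q \<subseteq> V) \<and>
            (\<forall>p \<in> P. set p \<subseteq> V) \<and>
            {word_pow u a @ v @ word_pow w b | a b. True} =
              (\<Union>(p, r, q) \<in> S. {p @ word_pow r c @ q | c. True}) \<union> P"
    proof (cases "u = []")
      case True
      have "{word_pow u a @ v @ word_pow w b | a b. True} =
              (\<Union>(p, r, q) \<in> {(v, w, [])}. {p @ word_pow r c @ q | c. True}) \<union> {}"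
        using True by auto
      then show ?thesis using words by (intro exI[of _ "{(v, w, [])}"] exI[of _ "{}"]) auto
    next
      case unz: False
      show ?thesis
      proof (cases "w = []")
        case True
        have "{word_pow u a @ v @ word_pow w b | a b. True} =
                (\<Union>(p, r, q) \<in> {([], u, v)}. {p @ word_pow r c @ q | c. True}) \<union> {}"
          using True by auto
        then show ?thesis using words by (intro exI[of _ "{([], u, v)}"] exI[of _ "{}"]) auto
      next
        case wnz: False
        show ?thesis
        proof (cases "v = []")
          case vnz: False
          obtain f v' where v: "v = f # v'" using vnz by (cases v) auto
          define t where "t = last u"
          define s0 where "s0 = hd w"
          have tC: "t \<in> C" using uC unz by (simp add: t_def) (meson last_in_set subsetD)
          have s0C: "s0 \<in> C" using wC wnz by (simp add: s0_def) (meson hd_in_set subsetD)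
          have fV: "f \<in> V" using words v by simp
          have tV: "t \<in> V" "s0 \<in> V" using tC s0C CV by auto
          have fnC: "f \<notin> C" using vC v by simp
          have r: "reduced E lt (u @ v @ w)" using red[rule_format, of 1 1] by (simp add: word_pow_Suc)
          have h1: "\<not> lt f t"
          proof
            assume lt: "lt f t"
            have "u @ v @ w = butlast u @ [t] @ [] @ [f] @ (v' @ w)" using unz v by (simp add: t_def)
            moreover have "no_arrow_from E f [t]" using fnC tC nadj v by (auto simp: no_arrow_from_def)
            moreover have "no_arrow_to E [t] f" using fnC tC nadj v by (auto simp: no_arrow_to_def)
            ultimately show False using r lt unfolding reduced_def by blast
          qed
          have h2: "\<not> lt s0 f"
          proof
            assume lt: "lt s0 f"
            have "u @ v @ w = u @ [f] @ v' @ [s0] @ tl w" using wnz v by (simp add: s0_def)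
            moreover have "no_arrow_from E s0 (f # v')" using vC s0C nadj v by (auto simp: no_arrow_from_def)
            moreover have "no_arrow_to E (f # v') s0" using vC s0C nadj v by (auto simp: no_arrow_to_def)
            ultimately show False using r lt unfolding reduced_def by blast
          qed
          have l1: "lt t f" using tot h1 fV tV fnC tC by metis
          have l2: "lt f s0" using tot h2 fV tV fnC s0C by metis
          show ?thesis
          proof (cases "f \<in> cycle_vertices k cyc")
            case True
            then obtain j where j: "j < k" "f \<in> set (cyc j)" by (auto simp: cycle_vertices_def)
            have "j \<noteq> n" using j fnC by (auto simp: C_def c_def)
            obtain b where b: "b < length (cyc j)" "f = cyc j ! b" using j by (auto simp: in_set_conv_nth)
            obtain a1 where a1: "a1 < length (cyc n)" "t = cyc n ! a1" using tC by (auto simp: C_def c_def in_set_conv_nth)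
            obtain a2 where a2: "a2 < length (cyc n)" "s0 = cyc n ! a2" using s0C by (auto simp: C_def c_def in_set_conv_nth)
            have "n < j" using c4 n(1) j(1) a1 b l1 \<open>j \<noteq> n\<close> by auto
            moreover have "j < n" using c4 n(1) j(1) a2 b l2 \<open>j \<noteq> n\<close> by auto
            ultimately show ?thesis by simp
          next
            case False
            have "s0 \<in> cycle_vertices k cyc" using s0C n(1) by (auto simp: C_def c_def cycle_vertices_def)
            then have "lt s0 f" using c5 False fV by blast
            then show ?thesis using h2 by simp
          qed
        next
          case vnil: True
          have red2: "\<And>a b. reduced E lt (word_pow u a @ word_pow w b)" using red vnil by simp
          have ru: "\<And>a. reduced E lt (word_pow u a)" using red2[of _ 0] by simp
          have rw: "\<And>b. reduced E lt (word_pow w b)" using red2[of 0] by simp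
          have uu: "reduced E lt (u @ u)" using ru[of 2] by (simp add: numeral_2_eq_2 word_pow_Suc)
          have ww: "reduced E lt (w @ w)" using rw[of 2] by (simp add: numeral_2_eq_2 word_pow_Suc)
          have eu: "\<forall>z y. z \<in> set c \<longrightarrow> y \<in> set c \<longrightarrow> E z y \<longrightarrow> cnt u z = cnt u y"
            using cnt_edge[OF uu uC _ _ _ uo ui] by (simp add: C_def)
          have ew: "\<forall>z y. z \<in> set c \<longrightarrow> y \<in> set c \<longrightarrow> E z y \<longrightarrow> cnt w z = cnt w y"
            using cnt_edge[OF ww wC _ _ _ uo ui] by (simp add: C_def)
          define Nu where "Nu = cnt u (c ! 0)"
          define Nw where "Nw = cnt w (c ! 0)"
          have cu: "\<forall>x\<in>C. cnt u x = Nu"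
          proof
            fix x assume "x \<in> C"
            then obtain i where "i < length c" "x = c ! i" by (auto simp: C_def in_set_conv_nth)
            then show "cnt u x = Nu" using cnt_uniform[OF sc eu] by (simp add: Nu_def)
          qed
          have cw: "\<forall>x\<in>C. cnt w x = Nw"
          proof
            fix x assume "x \<in> C"
            then obtain i where "i < length c" "x = c ! i" by (auto simp: C_def in_set_conv_nth)
            then show "cnt w x = Nw" using cnt_uniform[OF sc ew] by (simp add: Nw_def)
          qed
          have Nu0: "0 < Nu" using cu cnt_pos[of "hd u" u] unz uC by (metis hd_in_set subsetD)
          have Nw0: "0 < Nw" using cw cnt_pos[of "hd w" w] wnz wC by (metis hd_in_set subsetD)
          define s where "s = word_pow u Nw"
          define s' where "s' = word_pow w Nu"
          have rs: "reduced E lt s" using ru by (simp add: s_def)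
          have rs': "reduced E lt s'" using rw by (simp add: s'_def)
          have rss': "reduced E lt (s @ s')" using red2 by (simp add: s_def s'_def)
          have rss: "reduced E lt (s @ s)" using red2[of "Nw + Nw" 0] by (simp add: s_def word_pow_add)
          have sC: "set s \<subseteq> C" using uC set_word_pow[of u Nw] by (simp add: s_def)
          have s'C: "set s' \<subseteq> C" using wC set_word_pow[of w Nu] by (simp add: s'_def)
          have cs: "\<And>x. cnt s x = cnt s' x"
          proof -
            fix x
            show "cnt s x = cnt s' x"
            proof (cases "x \<in> C")
              case True then show ?thesis using cu cw by (simp add: s_def s'_def cnt_word_pow)
            next
              case False
              then have "x \<notin> set s" "x \<notin> set s'" using sC s'C by auto
              then show ?thesis by (simp add: cnt_notin)
            qed
          qed
          have pair: "filter (\<lambda>c. c = z \<or> c = y) s = filter (\<lambda>c. c = z \<or> c = y) s'" if e: "E z y" for z y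
          proof (cases "z \<in> C \<and> y \<in> C")
            case True
            let ?Q = "\<lambda>c. c = z \<or> c = y"
            have zy: "z \<noteq> y" using e irr by auto
            have A1: "successively (\<noteq>) (filter ?Q s)"
              using alt_reduced[OF rs sC e _ _ uo ui] True by simp
            have A2: "successively (\<noteq>) (filter ?Q s')"
              using alt_reduced[OF rs' s'C e _ _ uo ui] True by simp
            have A3: "successively (\<noteq>) (filter ?Q s @ filter ?Q s')"
              using alt_reduced[OF rss' _ e _ _ uo ui] True sC s'C by simp
            have A4: "successively (\<noteq>) (filter ?Q s @ filter ?Q s)"
              using alt_reduced[OF rss _ e _ _ uo ui] True sC by simp
            have len: "length (filter ?Q s) = length (filter ?Q s')"
              using length_filter_pair[OF zy] cs by simp
            show ?thesis
            proof (cases "filter ?Q s = []")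
              case True then show ?thesis using len by simp
            next
              case False
              then have ne': "filter ?Q s' \<noteq> []" using len by auto
              have "last (filter ?Q s) \<noteq> hd (filter ?Q s)" using A4 False by (simp add: successively_append_iff)
              moreover have "last (filter ?Q s) \<noteq> hd (filter ?Q s')" using A3 False ne' by (simp add: successively_append_iff)
              moreover have "hd (filter ?Q s) \<in> {z, y}" using hd_in_set[OF False] by auto
              moreover have "last (filter ?Q s) \<in> {z, y}" using last_in_set[OF False] by auto
              moreover have "hd (filter ?Q s') \<in> {z, y}" using hd_in_set[OF ne'] by auto
              ultimately have "hd (filter ?Q s) = hd (filter ?Q s')" by (rule two_elems)
              moreover have "set (filter ?Q s) \<subseteq> {z, y}" "set (filter ?Q s') \<subseteq> {z, y}" by auto
              ultimately show ?thesis using alt_eq[OF A1 A2 _ _ len] by blast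
            qed
          next
            case False
            show ?thesis
            proof (cases "z \<in> C")
              case True
              then have "y \<notin> C" using False by simp
              then have "y \<notin> set s" "y \<notin> set s'" using sC s'C by auto
              then show ?thesis using cs by (simp add: filter_pair_notin2)
            next
              case False
              then have "z \<notin> set s" "z \<notin> set s'" using sC s'C by auto
              then show ?thesis using cs by (simp add: filter_pair_notin)
            qed
          qed
          have filt: "\<forall>z y. (z = y \<or> E z y \<or> E y z) \<longrightarrow>
              filter (\<lambda>c. c = z \<or> c = y) s = filter (\<lambda>c. c = z \<or> c = y) s'"
          proof (intro allI impI)
            fix z y assume h: "z = y \<or> E z y \<or> E y z"
            show "filter (\<lambda>c. c = z \<or> c = y) s = filter (\<lambda>c. c = z \<or> c = y) s'"
            proof (cases "z = y")
              case True then show ?thesis using cs[of y] filter_single[of y s] filter_single[of y s'] by simp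
            next
              case False
              show ?thesis
              proof (cases "E z y")
                case True then show ?thesis using pair by blast
              next
                case False
                then have "E y z" using h \<open>z \<noteq> y\<close> by blast
                then have p: "filter (\<lambda>c. c = y \<or> c = z) s = filter (\<lambda>c. c = y \<or> c = z) s'" using pair by blast
                have sw: "filter (\<lambda>c. c = z \<or> c = y) t = filter (\<lambda>c. c = y \<or> c = z) t" for t
                  by (rule filter_cong) auto
                show ?thesis using p sw by simp
              qed
            qed
          qed
          have sV: "set s \<subseteq> V" "set s' \<subseteq> V" using sC s'C CV by auto
          have eqp: "word_pow u Nw = word_pow w Nu"
            using pf_unique[OF rs rs' sV tot filt] by (simp add: s_def s'_def)
          define S where "S = (\<lambda>r. ([] :: 'v list, u, word_pow w r)) ` {..<Nu}"
          have fam: "{word_pow u a @ v @ word_pow w b | a b. True} =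
              (\<Union>(p, r, q) \<in> S. {p @ word_pow r c @ q | c. True}) \<union> {}"
          proof (intro equalityI subsetI)
            fix x assume "x \<in> {word_pow u a @ v @ word_pow w b | a b. True}"
            then obtain a b where x: "x = word_pow u a @ word_pow w b" using vnil by auto
            define q where "q = b div Nu"
            define r where "r = b mod Nu"
            have b: "b = Nu * q + r" by (simp add: q_def r_def)
            have "word_pow w b = word_pow w (Nu * q) @ word_pow w r" using b by (simp add: word_pow_add)
            also have "word_pow w (Nu * q) = word_pow u (Nw * q)"
              by (simp add: word_pow_mult eqp)
            finally have "x = [] @ word_pow u (a + Nw * q) @ word_pow w r" using x by (simp add: word_pow_add)
            moreover have "([], u, word_pow w r) \<in> S" using Nu0 by (simp add: S_def r_def)
            ultimately show "x \<in> (\<Union>(p, r, q) \<in> S. {p @ word_pow r c @ q | c. True}) \<union> {}" by blast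
          next
            fix x assume "x \<in> (\<Union>(p, r, q) \<in> S. {p @ word_pow r c @ q | c. True}) \<union> {}"
            then obtain r cc where "x = word_pow u cc @ word_pow w r" by (auto simp: S_def)
            then show "x \<in> {word_pow u a @ v @ word_pow w b | a b. True}" using vnil by auto
          qed
          have "finite S" by (simp add: S_def)
          moreover have "\<forall>(p, r, q) \<in> S. set p \<subseteq> V \<and> set r \<subseteq> V \<and> set q \<subseteq> V"
            using words set_word_pow[of w] by (fastforce simp: S_def)
          ultimately show ?thesis using fam by (intro exI[of _ S] exI[of _ "{}"]) auto
        qed
      qed
    qed
    then show ?thesis by blast
  qed
qed


end
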